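(* Suppose that $E_Q[\xi\mid\mathcal G]\in L_{\mathcal F}$ for every $Q\in L_{\mathcal F}^*\cap\mathcal P_{\mathcal G}$ and every $\xi\in L_{\mathcal F}$. Let $Q\in L_{\mathcal F}^*\cap\mathcal P_{\mathcal G}$ and let $\pi:L_{\mathcal F}\to L_{\mathcal G}$ satisfy (MON) and (REG). Then for every $X\in L_{\mathcal F}$ \[ K(X,Q)=\inf_{\xi\in L_{\mathcal F}}\big\{\pi(\xi)\ \big|\ E_Q[\xi\mid\mathcal G]=E_Q[X\mid\mathcal G]\big\}, \] where $K(X,Q):=\inf_{\xi\in L_{\mathcal F}}\{\pi(\xi)\mid E_Q[\xi\mid\mathcal G]\ge E_Q[X\mid\mathcal G]\}$.
   Context: Let $(\Omega,\mathcal F,\mathbb P)$ be a probability space and $\mathcal G\subseteq\mathcal F$ a sub-$\sigma$-algebra. (In)equalities between random variables hold $\mathbb P$-a.s.; $\inf$ denotes the $\mathbb P$-essential infimum. Standing assumptions: $L_{\mathcal F}\subseteq L^0(\Omega,\mathcal F,\mathbb P)$, $L_{\mathcal G}\subseteq L^0(\Omega,\mathcal G,\mathbb P)$ are vector lattices closed under multiplication by indicators of $\mathcal F$- (resp. $\mathcal G$-) measurable sets; the order continuous dual $L^*_{\mathcal F}$ of $(L_{\mathcal F},\ge)$ is a lattice contained in $L^1(\Omega,\mathcal F,\mathbb P)$ (functionals $X\mapsto E_{\mathbb P}[ZX]$), closed under multiplication by indicators of sets in $\mathcal F$; $(L_{\mathcal F},\sigma(L_{\mathcal F},L^*_{\mathcal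 F}))$ is a locally convex Riesz space. $\mathcal P_{\mathcal G}$ is the set of probabilities $Q\ll\mathbb P$ with $Q=\mathbb P$ on $\mathcal G$ (identified with densities $dQ/d\mathbb P$); for such $Q$, comparisons of $\mathcal G$-measurable variables hold equivalently $Q$-a.s. or $\mathbb P$-a.s. (MON): $X\le Y\Rightarrow \pi(X)\le\pi(Y)$. (REG): $\pi(X\mathbf 1_A+Y\mathbf 1_{A^c})=\pi(X)\mathbf 1_A+\pi(Y)\mathbf 1_{A^c}$ for $X,Y\in L_{\mathcal F}$, $A\in\mathcal G$. *)

theory Defs
  imports "HOL-Probability.Probability"
begin

definition vector_lattice_rv :: "'a measure \<Rightarrow> ('a \<Rightarrow> real) set \<Rightarrow> bool" where
  "vector_lattice_rv N S \<longleftrightarrow>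
     S \<subseteq> borel_measurable N \<and> (\<lambda>_. 0) \<in> S \<and>
     (\<forall>X\<in>S. \<forall>Y\<in>S. (\<lambda>\<omega>. X \<omega> + Y \<omega>) \<in> S) \<and>
     (\<forall>c::real. \<forall>X\<in>S. (\<lambda>\<omega>. c * X \<omega>) \<in> S) \<and>
     (\<forall>X\<in>S. \<forall>Y\<in>S. (\<lambda>\<omega>. max (X \<omega>) (Y \<omega>)) \<in> S) \<and>
     (\<forall>X\<in>S. \<forall>Y\<in>S. (\<lambda>\<omega>. min (X \<omega>) (Y \<omega>)) \<in> S)"

definition indicator_closed :: "'a measure \<Rightarrow> ('a \<Rightarrow> real) set \<Rightarrow> bool" where
  "indicator_closed N S \<longleftrightarrow> (\<forall>A\<in>sets N. \<forall>X\<in>S. (\<lambda>\<omega>. indicator A \<omega> * X \<omega>) \<in> S)"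

text \<open>Order continuous dual of (L, \<ge>) (order taken P-a.s.), identified with densities Z
  in L^1 acting via X \<mapsto> E_P[Z X]: such a functional is order continuous iff for every
  nonempty downward directed D \<subseteq> L with infimum 0 in L, the net (E[Z d])_{d\<in>D}
  converges to 0.\<close>
definition order_cont_dual :: "'a measure \<Rightarrow> ('a \<Rightarrow> real) set \<Rightarrow> ('a \<Rightarrow> real) set" where
  "order_cont_dual M L = {Z. integrable M Z \<and>
     (\<forall>X\<in>L. integrable M (\<lambda>\<omega>. Z \<omega> * X \<omega>)) \<and>
     (\<forall>D. D \<subseteq> L \<and> D \<noteq> {} \<and>
          (\<forall>a\<in>D. \<forall>b\<in>D. \<exists>c\<in>D. (AE \<omega> in M. c \<omega> \<le> a \<omega>) \<and> (AE \<omega> in M. c \<omega> \<le> b \<omega>)) \<and>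
          (\<forall>d\<in>D. AE \<omega> in M. 0 \<le> d \<omega>) \<and>
          (\<forall>Y\<in>L. (\<forall>d\<in>D. AE \<omega> in M. Y \<omega> \<le> d \<omega>) \<longrightarrow> (AE \<omega> in M. Y \<omega> \<le> 0))
        \<longrightarrow> (\<forall>e>0. \<exists>d0\<in>D. \<forall>d\<in>D. (AE \<omega> in M. d \<omega> \<le> d0 \<omega>) \<longrightarrow>
                \<bar>\<integral>\<omega>. Z \<omega> * d \<omega> \<partial>M\<bar> < e))}"

text \<open>P_G: densities dQ/dP of probabilities Q \<ll> P with Q = P on G.\<close>
definition PG :: "'a measure \<Rightarrow> 'a measure \<Rightarrow> ('a \<Rightarrow> real) set" where
  "PG M G = {Z. Z \<in> borel_measurable M \<and> (AE \<omega> in M. 0 \<le> Z \<omega>) \<and> integrable M Z \<and>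
     (\<forall>A\<in>sets G. (\<integral>\<omega>. indicator A \<omega> * Z \<omega> \<partial>M) = measure M A)}"

definition condE :: "'a measure \<Rightarrow> 'a measure \<Rightarrow> ('a \<Rightarrow> real) \<Rightarrow> ('a \<Rightarrow> real) \<Rightarrow> ('a \<Rightarrow> real)" where
  "condE M G Z \<xi> = real_cond_exp (density M (\<lambda>\<omega>. ennreal (Z \<omega>))) G \<xi>"

definition is_ess_inf :: "'a measure \<Rightarrow> ('a \<Rightarrow> real) set \<Rightarrow> ('a \<Rightarrow> ereal) \<Rightarrow> bool" where
  "is_ess_inf M S Y \<longleftrightarrow> Y \<in> borel_measurable M \<and>
     (\<forall>X\<in>S. AE \<omega> in M. Y \<omega> \<le> ereal (X \<omega>)) \<and>
     (\<forall>W\<in>borel_measurable M. (\<forall>X\<in>S. AE \<omega> in M. W \<omega> \<le> ereal (X \<omega>)) \<longrightarrow>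
        (AE \<omega> in M. W \<omega> \<le> Y \<omega>))"

definition ess_inf_fam :: "'a measure \<Rightarrow> ('a \<Rightarrow> real) set \<Rightarrow> ('a \<Rightarrow> ereal)" where
  "ess_inf_fam M S = (SOME Y. is_ess_inf M S Y)"

definition Kfun :: "'a measure \<Rightarrow> 'a measure \<Rightarrow> ('a \<Rightarrow> real) set \<Rightarrow>
    (('a \<Rightarrow> real) \<Rightarrow> ('a \<Rightarrow> real)) \<Rightarrow> ('a \<Rightarrow> real) \<Rightarrow> ('a \<Rightarrow> real) \<Rightarrow> ('a \<Rightarrow> ereal)" where
  "Kfun M G LF \<pi> X Z = ess_inf_fam M
     {\<pi> \<xi> | \<xi>. \<xi> \<in> LF \<and> (AE \<omega> in M. condE M G Z \<xi> \<omega> \<ge> condE M G Z X \<omega>)}"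

end

theory Submission imports Defs begin

lemma key:
  fixes M G :: "'a measure" and Z :: "'a \<Rightarrow> real"
  assumes P: "prob_space M" and sub: "subalgebra M G"
    and Zpg: "Z \<in> PG M G"
  defines "N \<equiv> density M (\<lambda>\<omega>. ennreal (Z \<omega>))"
  shows "finite_measure_subalgebra N G"
    and "\<And>f g :: 'a \<Rightarrow> real. f \<in> borel_measurable G \<Longrightarrow> g \<in> borel_measurable G \<Longrightarrow>
          AE x in N. f x = g x \<Longrightarrow> AE x in M. f x = g x"
proof -
  interpret prob_space M by fact
  have Zm[measurable]: "Z \<in> borel_measurable M" and Zp: "AE \<omega> in M. 0 \<le> Z \<omega>" and Zi: "integrable M Z"
    and ZA: "\<And>A. A \<in> sets G \<Longrightarrow> (\<integral>\<omega>. indicator A \<omega> * Z \<omega> \<partial>M) = measure M A"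
    using Zpg unfolding PG_def by auto
  have sG: "sets G \<subseteq> sets M" "space G = space M" using sub unfolding subalgebra_def by auto
  have emN: "emeasure N A = ennreal (measure M A)" if "A \<in> sets G" for A
  proof -
    have A: "A \<in> sets M" using that sG by auto
    have "emeasure N A = (\<integral>\<^sup>+ x. ennreal (Z x) * indicator A x \<partial>M)"
      unfolding N_def by (rule emeasure_density) (auto simp: A)
    also have "\<dots> = (\<integral>\<^sup>+ x. ennreal (indicator A x * Z x) \<partial>M)"
      by (intro nn_integral_cong) (auto simp: indicator_def)
    also have "\<dots> = ennreal (\<integral>\<omega>. indicator A \<omega> * Z \<omega> \<partial>M)"
      apply (rule nn_integral_eq_integral)
      using integrable_mult_indicator[OF A Zi] Zp by (auto simp: indicator_def)
    finally show ?thesis using ZA[OF that] by simp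
  qed
  have "sets N = sets M" "space N = space M" unfolding N_def by auto
  then have subN: "subalgebra N G" using sub unfolding subalgebra_def by auto
  have "emeasure N (space N) \<noteq> \<infinity>"
    using emN[of "space M"] sG \<open>space N = space M\<close> sets.top[of G] by simp
  then have "finite_measure N" by (rule finite_measureI)
  then show "finite_measure_subalgebra N G"
    using subN by (simp add: finite_measure_subalgebra_def finite_measure_subalgebra_axioms_def)
  fix f g :: "'a \<Rightarrow> real" assume [measurable]: "f \<in> borel_measurable G" "g \<in> borel_measurable G"
    and ae: "AE x in N. f x = g x"
  define A where "A = {x\<in>space G. f x \<noteq> g x}"
  have AG: "A \<in> sets G" unfolding A_def by measurable
  have "emeasure N A = 0"
  proof -
    have eq: "A = {x\<in>space N. \<not> (f x = g x)}" unfolding A_def using sG \<open>space N = space M\<close> by simp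
    have "{x\<in>space N. \<not> (f x = g x)} \<in> sets N" using AG sG \<open>sets N = sets M\<close> eq by auto
    then have "A \<in> null_sets N" using AE_iff_measurable[OF _ refl, of N "\<lambda>x. f x = g x"] ae eq by auto
    then show ?thesis by auto
  qed
  then have "measure M A = 0" using emN[OF AG] by simp
  then have "A \<in> null_sets M" using AG sG by (auto simp: emeasure_eq_measure)
  then show "AE x in M. f x = g x"
    using sG unfolding A_def by (auto intro: AE_I')
qed


lemma ess_inf_fam_eq:
  assumes "S2 \<subseteq> S1" "\<forall>x\<in>S1. \<exists>y\<in>S2. AE \<omega> in M. y \<omega> \<le> x \<omega>"
  shows "ess_inf_fam M S1 = ess_inf_fam M S2"
proof -
  have "is_ess_inf M S1 = is_ess_inf M S2"
  proof (rule ext)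
    fix Y
    have lb: "(\<forall>X\<in>S1. AE \<omega> in M. W \<omega> \<le> ereal (X \<omega>)) \<longleftrightarrow> (\<forall>X\<in>S2. AE \<omega> in M. W \<omega> \<le> ereal (X \<omega>))" for W :: "'a \<Rightarrow> ereal"
    proof
      assume "\<forall>X\<in>S1. AE \<omega> in M. W \<omega> \<le> ereal (X \<omega>)" then show "\<forall>X\<in>S2. AE \<omega> in M. W \<omega> \<le> ereal (X \<omega>)"
        using assms(1) by blast
    next
      assume h: "\<forall>X\<in>S2. AE \<omega> in M. W \<omega> \<le> ereal (X \<omega>)"
      show "\<forall>X\<in>S1. AE \<omega> in M. W \<omega> \<le> ereal (X \<omega>)"
      proof
        fix X assume "X \<in> S1"
        then obtain y where y: "y \<in> S2" "AE \<omega> in M. y \<omega> \<le> X \<omega>" using assms(2) by blast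
        from h y(1) have "AE \<omega> in M. W \<omega> \<le> ereal (y \<omega>)" by blast
        with y(2) show "AE \<omega> in M. W \<omega> \<le> ereal (X \<omega>)"
          by eventually_elim (meson ereal_less_eq(3) order_trans)
      qed
    qed
    show "is_ess_inf M S1 Y = is_ess_inf M S2 Y"
      unfolding is_ess_inf_def using lb[of Y] lb by blast
  qed
  then show ?thesis unfolding ess_inf_fam_def by simp
qed

theorem lemma14:
  fixes M G :: "'a measure"
    and LF LG :: "('a \<Rightarrow> real) set"
    and \<pi> :: "('a \<Rightarrow> real) \<Rightarrow> ('a \<Rightarrow> real)"
    and Z X :: "'a \<Rightarrow> real"
  assumes "prob_space M"
    and "subalgebra M G"
    and "vector_lattice_rv M LF" and "indicator_closed M LF"
    and "vector_lattice_rv G LG" and "indicator_closed G LG"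
    and "vector_lattice_rv M (order_cont_dual M LF)"
    and "indicator_closed M (order_cont_dual M LF)"
    and hyp: "\<forall>Q\<in>order_cont_dual M LF \<inter> PG M G. \<forall>\<xi>\<in>LF. condE M G Q \<xi> \<in> LF"
    and Q: "Z \<in> order_cont_dual M LF \<inter> PG M G"
    and "\<forall>\<xi>\<in>LF. \<pi> \<xi> \<in> LG"
    and MON: "\<forall>U\<in>LF. \<forall>V\<in>LF. (AE \<omega> in M. U \<omega> \<le> V \<omega>) \<longrightarrow> (AE \<omega> in M. \<pi> U \<omega> \<le> \<pi> V \<omega>)"
    and REG: "\<forall>U\<in>LF. \<forall>V\<in>LF. \<forall>A\<in>sets G. AE \<omega> in M.
        \<pi> (\<lambda>\<omega>'. U \<omega>' * indicator A \<omega>' + V \<omega>' * indicator (space M - A) \<omega>') \<omega>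
          = \<pi> U \<omega> * indicator A \<omega> + \<pi> V \<omega> * indicator (space M - A) \<omega>"
    and "X \<in> LF"
  shows "AE \<omega> in M. Kfun M G LF \<pi> X Z \<omega> =
           ess_inf_fam M {\<pi> \<xi> | \<xi>. \<xi> \<in> LF \<and> (AE s in M. condE M G Z \<xi> s = condE M G Z X s)} \<omega>"
proof -
  interpret prob_space M by fact
  define N where "N = density M (\<lambda>\<omega>. ennreal (Z \<omega>))"
  have ZPG: "Z \<in> PG M G" using Q by auto
  interpret fms: finite_measure_subalgebra N G
    using key(1)[OF assms(1,2) ZPG] unfolding N_def .
  have transfer: "\<And>f g :: 'a \<Rightarrow> real. f \<in> borel_measurable G \<Longrightarrow> g \<in> borel_measurable G \<Longrightarrow>
          AE x in N. f x = g x \<Longrightarrow> AE x in M. f x = g x"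
    using key(2)[OF assms(1,2) ZPG] unfolding N_def by blast
  have cE: "condE M G Z = real_cond_exp N G" unfolding condE_def N_def by (rule ext) simp
  have Zm[measurable]: "Z \<in> borel_measurable M" and Zp: "AE \<omega> in M. 0 \<le> Z \<omega>"
    using ZPG unfolding PG_def by auto
  have VL: "vector_lattice_rv M LF" by fact
  have LFm: "\<And>\<xi>. \<xi> \<in> LF \<Longrightarrow> \<xi> \<in> borel_measurable M" using VL unfolding vector_lattice_rv_def by auto
  have intN: "integrable N \<xi>" if "\<xi> \<in> LF" for \<xi>
  proof -
    have "integrable M (\<lambda>\<omega>. Z \<omega> * \<xi> \<omega>)" using Q that unfolding order_cont_dual_def by auto
    then show ?thesis unfolding N_def using integrable_density[OF LFm[OF that] Zm Zp] by simp
  qed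
  have dom: "\<exists>\<eta>\<in>LF. (AE \<omega> in M. \<eta> \<omega> \<le> \<xi> \<omega>) \<and> (AE s in M. condE M G Z \<eta> s = condE M G Z X s)"
    if \<xi>: "\<xi> \<in> LF" and ge: "AE \<omega> in M. condE M G Z \<xi> \<omega> \<ge> condE M G Z X \<omega>" for \<xi>
  proof -
    define c\<xi> where "c\<xi> = condE M G Z \<xi>"
    define cX where "cX = condE M G Z X"
    have c\<xi>LF: "c\<xi> \<in> LF" using hyp Q \<xi> unfolding c\<xi>_def by blast
    have cXLF: "cX \<in> LF" using hyp Q \<open>X \<in> LF\<close> unfolding cX_def by blast
    have addL: "\<And>U V. U\<in>LF \<Longrightarrow> V\<in>LF \<Longrightarrow> (\<lambda>\<omega>. U \<omega> + V \<omega>) \<in> LF"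
      using VL unfolding vector_lattice_rv_def by simp
    have mulL: "\<And>c U. U\<in>LF \<Longrightarrow> (\<lambda>\<omega>. c * U \<omega>) \<in> LF"
      using VL unfolding vector_lattice_rv_def by simp
    define \<eta> where "\<eta> = (\<lambda>\<omega>. \<xi> \<omega> + (-1) * c\<xi> \<omega> + cX \<omega>)"
    have "\<eta> \<in> LF" unfolding \<eta>_def by (rule addL[OF addL[OF \<xi> mulL[OF c\<xi>LF]] cXLF])
    have \<eta>eq: "\<eta> = (\<lambda>\<omega>. (\<xi> \<omega> - c\<xi> \<omega>) + cX \<omega>)" unfolding \<eta>_def by (rule ext) simp
    have le: "AE \<omega> in M. \<eta> \<omega> \<le> \<xi> \<omega>" using ge unfolding \<eta>eq c\<xi>_def cX_def by eventually_elim simp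
    have [measurable]: "c\<xi> \<in> borel_measurable G" "cX \<in> borel_measurable G"
      unfolding c\<xi>_def cX_def cE by auto
    have ic\<xi>: "integrable N c\<xi>" and icX: "integrable N cX"
      unfolding c\<xi>_def cX_def cE using intN \<xi> \<open>X \<in> LF\<close> by auto
    have i\<xi>: "integrable N \<xi>" using intN \<xi> .
    have a1: "AE x in N. real_cond_exp N G \<eta> x = real_cond_exp N G (\<lambda>\<omega>. \<xi> \<omega> - c\<xi> \<omega>) x + real_cond_exp N G cX x"
      unfolding \<eta>eq using fms.real_cond_exp_add[of "\<lambda>\<omega>. \<xi> \<omega> - c\<xi> \<omega>" cX] i\<xi> ic\<xi> icX by auto
    have a2: "AE x in N. real_cond_exp N G (\<lambda>\<omega>. \<xi> \<omega> - c\<xi> \<omega>) x = real_cond_exp N G \<xi> x - real_cond_exp N G c\<xi> x"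
      using fms.real_cond_exp_diff[of \<xi> c\<xi>] i\<xi> ic\<xi> by auto
    have a3: "AE x in N. real_cond_exp N G c\<xi> x = c\<xi> x" using fms.real_cond_exp_F_meas ic\<xi> by auto
    have a4: "AE x in N. real_cond_exp N G cX x = cX x" using fms.real_cond_exp_F_meas icX by auto
    have "AE x in N. real_cond_exp N G \<eta> x = cX x"
      using a1 a2 a3 a4 unfolding c\<xi>_def cE by eventually_elim simp
    then have "AE x in M. real_cond_exp N G \<eta> x = cX x"
      by (intro transfer) auto
    then show ?thesis using \<open>\<eta> \<in> LF\<close> le unfolding cE cX_def by auto
  qed
  have "Kfun M G LF \<pi> X Z =
           ess_inf_fam M {\<pi> \<xi> | \<xi>. \<xi> \<in> LF \<and> (AE s in M. condE M G Z \<xi> s = condE M G Z X s)}"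
    unfolding Kfun_def
  proof (rule ess_inf_fam_eq)
    show "{\<pi> \<xi> | \<xi>. \<xi> \<in> LF \<and> (AE s in M. condE M G Z \<xi> s = condE M G Z X s)} \<subseteq>
      {\<pi> \<xi> | \<xi>. \<xi> \<in> LF \<and> (AE \<omega> in M. condE M G Z \<xi> \<omega> \<ge> condE M G Z X \<omega>)}"
      by (auto elim!: eventually_mono)
    show "\<forall>x\<in>{\<pi> \<xi> | \<xi>. \<xi> \<in> LF \<and> (AE \<omega> in M. condE M G Z \<xi> \<omega> \<ge> condE M G Z X \<omega>)}.
       \<exists>y\<in>{\<pi> \<xi> | \<xi>. \<xi> \<in> LF \<and> (AE s in M. condE M G Z \<xi> s = condE M G Z X s)}. AE \<omega> in M. y \<omega> \<le> x \<omega>"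
    proof safe
      fix \<xi> assume "\<xi> \<in> LF" "AE \<omega> in M. condE M G Z \<xi> \<omega> \<ge> condE M G Z X \<omega>"
      then obtain \<eta> where "\<eta> \<in> LF" "AE \<omega> in M. \<eta> \<omega> \<le> \<xi> \<omega>" "AE s in M. condE M G Z \<eta> s = condE M G Z X s"
        using dom by blast
      then show "\<exists>y\<in>{\<pi> \<xi> | \<xi>. \<xi> \<in> LF \<and> (AE s in M. condE M G Z \<xi> s = condE M G Z X s)}. AE \<omega> in M. y \<omega> \<le> \<pi> \<xi> \<omega>"
        using MON \<open>\<xi> \<in> LF\<close> by blast
    qed
  qed
  then show ?thesis by simp
qed

end
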